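(* Let $\mathbb{W}$ be a subgroup of the finite group $\mathbb{W}_1$ that contains the group $\mathbb{W}_1^{\mathfrak{A}}$, and let $G$ be a $\mathbb{W}$-invariant finite subgroup of $\mathbb{T}_1$. Then there exists $n\in\mathbb{N}$ such that one of the following five possibilities holds: \begin{enumerate} \item $G\cong\mu_n^3$; \item $n$ is even and $G\cong\mu_{n}^2\times\mu_{\frac{n}{2}}$; \item $n$ is even and $G\cong\mu_{n}\times\mu_{\frac{n}{2}}^2$; \item $n$ is divisible by $4$ and $G\cong\mu_{n}\times\mu_{\frac{n}{2}}\times\mu_{\frac{n}{4}}$; \item $n$ is divisible by $4$ and $G\cong\mu_{n}\times\mu_{\frac{n}{4}}^2$. \end{enumerate} Here $\mu_k$ denotes the cyclic group of order $k$.
   Context: $M_1=\mathbb{Z}^4/\langle h_1+h_2+h_3+h_4\rangle$, with basis $e_1,e_2,e_3$ the classes of $h_1,h_2,h_3$. The group $\mathfrak{S}_4\times\mu_2$ acts on $M_1$: $\mathfrak{S}_4$ permutes the $h_i$ (so $g(e_i)=e_{g(i)}$ if $g(i)\ne4$ and $-e_1-e_2-e_3$ otherwise) and the generator $\sigma$ of $\mu_2$ acts as $-\mathrm{id}$; the image in $\mathrm{GL}(M_1)\cong\mathrm{GL}_3(\mathbb{Z})$ is denoted $\mathbb{W}_1$, and $\mathbb{W}_1^{\mathfrak{A}}$ is its unique subgroup isomorphic to $\mathfrak{A}_4$ (image of $\mathfrak{A}_4\times\{1\}$). $\mathbb{T}_1=\mathrm{Spec}\,\mathbb{C}[M_1]\cong\mathbb{G}_m^3$,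 on which $\mathrm{GL}(M_1)$ acts by group automorphisms via its action on characters. *)

theory Defs
  imports "HOL-Algebra.Elementary_Groups" "HOL-Combinatorics.Permutations" "Jordan_Normal_Form.Matrix"
begin

text \<open>Elements of M_1 are integer vectors of dimension 3 w.r.t. the basis e_1,e_2,e_3
  (classes of h_1,h_2,h_3).  Indices are shifted to 0,1,2; h_4 has index 3.\<close>

definition hcls :: "nat \<Rightarrow> int vec" where
  "hcls i = (if i < 3 then unit_vec 3 i else vec 3 (\<lambda>_. -1))"

text \<open>Matrix (columns = images of basis vectors) of the permutation g of {0,1,2,3}:
  g(e_j) = class of h_(g j).\<close>
definition perm_mat :: "(nat \<Rightarrow> nat) \<Rightarrow> int mat" where
  "perm_mat g = mat 3 3 (\<lambda>(i, j). hcls (g j) $ i)"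

text \<open>W_1 = image of S_4 x mu_2 in GL_3(Z); sigma acts as -id.\<close>
definition W1 :: "int mat set" where
  "W1 = {smult_mat s (perm_mat g) | g s. g permutes {0..<4} \<and> s \<in> {1, -1}}"

definition W1A :: "int mat set" where
  "W1A = {perm_mat g | g. g permutes {0..<4} \<and> evenperm g}"

text \<open>A point of T_1 is a homomorphism M_1 -> C^*, determined by its values
  t$0, t$1, t$2 on the basis.\<close>
definition T1_carrier :: "complex vec set" where
  "T1_carrier = {t. dim_vec t = 3 \<and> (\<forall>i<3. t $ i \<noteq> 0)}"

definition T1 :: "complex vec monoid" where
  "T1 = \<lparr>carrier = T1_carrier,
         monoid.mult = (\<lambda>s t. vec 3 (\<lambda>i. s $ i * t $ i)),
         monoid.one = vec 3 (\<lambda>_. 1)\<rparr>"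

text \<open>Action of A in GL(M_1) on T_1 via its action on characters:
  (A.t)(e_j) = t(A e_j) = prod_i t(e_i)^(A_ij).  (Invariance of a subgroup under a
  group W does not depend on whether one uses A or A^{-1} here.)\<close>
definition T1_act :: "int mat \<Rightarrow> complex vec \<Rightarrow> complex vec" where
  "T1_act A t = vec 3 (\<lambda>j. \<Prod>i<3. (t $ i) powi (A $$ (i, j)))"

abbreviation mu :: "nat \<Rightarrow> int monoid" where
  "mu k \<equiv> integer_mod_group k"

end

theory Submission
  imports Defs "HOL-Library.Real_Mod"
begin

lemma T1_carrier_eq[simp]: "carrier T1 = T1_carrier" by (simp add: T1_def)
lemma T1_mult[simp]: "x \<otimes>\<^bsub>T1\<^esub> y = vec 3 (\<lambda>i. x $ i * y $ i)" by (simp add: T1_def)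
lemma T1_one[simp]: "\<one>\<^bsub>T1\<^esub> = vec 3 (\<lambda>_. 1)" by (simp add: T1_def)

lemma group_T1: "group T1"
proof (rule groupI)
  fix x y assume "x \<in> carrier T1" "y \<in> carrier T1"
  then show "x \<otimes>\<^bsub>T1\<^esub> y \<in> carrier T1" by (auto simp: T1_carrier_def)
next
  show "\<one>\<^bsub>T1\<^esub> \<in> carrier T1" by (auto simp: T1_carrier_def)
next
  fix x y z assume "x \<in> carrier T1" "y \<in> carrier T1" "z \<in> carrier T1"
  then show "x \<otimes>\<^bsub>T1\<^esub> y \<otimes>\<^bsub>T1\<^esub> z = x \<otimes>\<^bsub>T1\<^esub> (y \<otimes>\<^bsub>T1\<^esub> z)"
    by (auto simp: T1_carrier_def mult.assoc intro!: eq_vecI)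
next
  fix x assume "x \<in> carrier T1"
  then show "\<one>\<^bsub>T1\<^esub> \<otimes>\<^bsub>T1\<^esub> x = x" by (auto simp: T1_carrier_def intro!: eq_vecI)
next
  fix x assume "x \<in> carrier T1"
  then show "\<exists>y\<in>carrier T1. y \<otimes>\<^bsub>T1\<^esub> x = \<one>\<^bsub>T1\<^esub>"
    by (intro bexI[of _ "vec 3 (\<lambda>i. inverse (x $ i))"]) (auto simp: T1_carrier_def intro!: eq_vecI)
qed

lemma T1_inv: assumes "x \<in> T1_carrier" shows "inv\<^bsub>T1\<^esub> x = vec 3 (\<lambda>i. inverse (x $ i))"
proof -
  interpret group T1 by (rule group_T1)
  show ?thesis
    by (rule inv_equality) (use assms in \<open>auto simp: T1_carrier_def intro!: eq_vecI\<close>)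
qed

definition X :: "complex vec \<Rightarrow> nat \<Rightarrow> complex" where
  "X t i = (if i < 3 then t $ i else inverse (t $ 0 * t $ 1 * t $ 2))"

lemma X_mult: "X (vec 3 (\<lambda>i. s $ i * t $ i)) i = X s i * X t i"
  by (simp add: X_def inverse_mult_distrib mult_ac)

lemma X_inverse: "X (vec 3 (\<lambda>i. inverse (t $ i))) i = inverse (X t i)"
  by (simp add: X_def inverse_mult_distrib mult_ac)

lemma X_vec: "X (vec 3 f) i = (if i < 3 then f i else inverse (f 0 * f 1 * f 2))"
  by (simp add: X_def)

lemma X_nz: "t \<in> T1_carrier \<Longrightarrow> i < 4 \<Longrightarrow> X t i \<noteq> 0"
  by (auto simp: X_def T1_carrier_def)

lemma X_prod: assumes "t \<in> T1_carrier" shows "X t 0 * X t 1 * X t 2 * X t 3 = 1"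
proof -
  have "t $ 0 \<noteq> 0" "t $ 1 \<noteq> 0" "t $ 2 \<noteq> 0" using assms by (auto simp: T1_carrier_def)
  then show ?thesis by (simp add: X_def field_simps)
qed

lemma X_eqI: "s \<in> T1_carrier \<Longrightarrow> t \<in> T1_carrier \<Longrightarrow> (\<And>i. i < 3 \<Longrightarrow> X s i = X t i) \<Longrightarrow> s = t"
  by (auto simp: X_def T1_carrier_def intro!: eq_vecI)

lemma vec_in_T1: "(\<And>i. i < 3 \<Longrightarrow> f i \<noteq> 0) \<Longrightarrow> vec 3 f \<in> T1_carrier"
  by (auto simp: T1_carrier_def)

lemma lt3: "{..<3::nat} = {0,1,2}" by auto

lemma perm_lt4: "g permutes {0..<4::nat} \<Longrightarrow> i < 4 \<Longrightarrow> g i < 4"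
  using permutes_in_image by fastforce

lemma act_eq:
  assumes g: "g permutes {0..<4::nat}"
  shows "T1_act (perm_mat g) t = vec 3 (\<lambda>j. X t (g j))"
proof (rule eq_vecI)
  fix j assume j: "j < dim_vec (vec 3 (\<lambda>j. X t (g j)))"
  then have j3: "j < 3" by simp
  have gj: "g j < 4" using perm_lt4[OF g, of j] j3 by simp
  have e: "perm_mat g $$ (i, j) = hcls (g j) $ i" if "i < 3" for i
    using that j3 by (simp add: perm_mat_def)
  have "T1_act (perm_mat g) t $ j = (\<Prod>i<3. t $ i powi (hcls (g j) $ i))"
    using j3 e by (simp add: T1_act_def)
  also have "\<dots> = X t (g j)"
  proof (cases "g j < 3")
    case True
    then consider "g j = 0" | "g j = 1" | "g j = 2" by linarith
    then show ?thesis by cases (simp_all add: lt3 hcls_def X_def)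
  next
    case False
    then have g3: "g j = 3" using gj by simp
    have "(\<Prod>i<3. t $ i powi (hcls (g j) $ i)) = (\<Prod>i<3. t $ i powi (-1))"
      by (rule prod.cong) (auto simp: g3 hcls_def)
    also have "\<dots> = inverse (t $ 0 * t $ 1 * t $ 2)"
      by (simp add: lt3 inverse_mult_distrib mult_ac)
    finally show ?thesis by (simp add: X_def g3)
  qed
  finally show "T1_act (perm_mat g) t $ j = vec 3 (\<lambda>j. X t (g j)) $ j" using j3 by simp
qed (simp add: T1_act_def)

lemma X_act:
  assumes g: "g permutes {0..<4::nat}" and t: "t \<in> T1_carrier" and i: "i < 4"
  shows "X (vec 3 (\<lambda>j. X t (g j))) i = X t (g i)"
proof (cases "i < 3")
  case True then show ?thesis by (simp add: X_def)
next
  case False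
  then have i3: "i = 3" using i by simp
  have "(\<Prod>k\<in>{0..<4}. X t (g k)) = (\<Prod>k\<in>g ` {0..<4}. X t k)"
    by (subst prod.reindex) (use permutes_inj_on[OF g] in auto)
  also have "g ` {0..<4} = {0..<4}" using permutes_image[OF g] .
  also have "(\<Prod>k\<in>{0..<4::nat}. X t k) = 1"
    using X_prod[OF t] by (simp add: atLeast0LessThan eval_nat_numeral mult_ac)
  finally have p: "X t (g 0) * X t (g 1) * X t (g 2) * X t (g 3) = 1"
    by (simp add: atLeast0LessThan eval_nat_numeral mult_ac)
  have "inverse (X t (g 0) * X t (g 1) * X t (g 2)) = X t (g 3)"
    using p by (metis inverse_unique mult.assoc)
  then show ?thesis using i3 by (simp add: X_vec)
qed

lemma act_in_T1:
  assumes g: "g permutes {0..<4::nat}" and t: "t \<in> T1_carrier"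
  shows "vec 3 (\<lambda>j. X t (g j)) \<in> T1_carrier"
  using X_nz[OF t] perm_lt4[OF g] by (intro vec_in_T1) auto

lemma even2:
  assumes "a \<noteq> b" "c \<noteq> d" "a < 4" "b < 4" "c < 4" "d < (4::nat)"
  shows "(transpose a b \<circ> transpose c d) permutes {0..<4} \<and> evenperm (transpose a b \<circ> transpose c d)"
  using assms
  by (auto simp: evenperm_comp permutation_swap_id evenperm_swap intro!: permutes_compose permutes_swap_id)

lemma four_cases: "i < (4::nat) \<Longrightarrow> i = 0 \<or> i = 1 \<or> i = 2 \<or> i = 3" by auto

lemma ex_to01: "a \<noteq> b \<Longrightarrow> c \<noteq> d \<Longrightarrow> a < 4 \<Longrightarrow> b < 4 \<Longrightarrow> c < 4 \<Longrightarrow> d < (4::nat) \<Longrightarrow>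
  (transpose a b \<circ> transpose c d) i = 0 \<Longrightarrow> (transpose a b \<circ> transpose c d) j = 1 \<Longrightarrow>
  \<exists>g. g permutes {0..<4} \<and> evenperm g \<and> g i = 0 \<and> g j = 1"
  using even2 by blast

lemma ex_from01: "a \<noteq> b \<Longrightarrow> c \<noteq> d \<Longrightarrow> a < 4 \<Longrightarrow> b < 4 \<Longrightarrow> c < 4 \<Longrightarrow> d < (4::nat) \<Longrightarrow>
  (transpose a b \<circ> transpose c d) 0 = i \<Longrightarrow> (transpose a b \<circ> transpose c d) 1 = j \<Longrightarrow>
  \<exists>g. g permutes {0..<4} \<and> evenperm g \<and> g 0 = i \<and> g 1 = j"
  using even2 by blast

lemma trans_to01:
  assumes "i \<noteq> j" "i < 4" "j < (4::nat)"
  shows "\<exists>g. g permutes {0..<4} \<and> evenperm g \<and> g i = 0 \<and> g j = 1"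
proof -
  consider "i = 0" "j = 1" | "i = 0" "j = 2" | "i = 0" "j = 3" | "i = 1" "j = 0" | "i = 1" "j = 2" | "i = 1" "j = 3" | "i = 2" "j = 0" | "i = 2" "j = 1" | "i = 2" "j = 3" | "i = 3" "j = 0" | "i = 3" "j = 1" | "i = 3" "j = 2"
    using four_cases[OF assms(2)] four_cases[OF assms(3)] assms(1) by (elim disjE) auto
  then show ?thesis
  proof cases
    case 1 then show ?thesis by (intro ex_to01[of 0 1 0 1]) (simp_all add: transpose_def)
  next
    case 2 then show ?thesis by (intro ex_to01[of 1 2 1 3]) (simp_all add: transpose_def)
  next
    case 3 then show ?thesis by (intro ex_to01[of 1 2 2 3]) (simp_all add: transpose_def)
  next
    case 4 then show ?thesis by (intro ex_to01[of 0 1 2 3]) (simp_all add: transpose_def)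
  next
    case 5 then show ?thesis by (intro ex_to01[of 0 1 0 2]) (simp_all add: transpose_def)
  next
    case 6 then show ?thesis by (intro ex_to01[of 0 1 0 3]) (simp_all add: transpose_def)
  next
    case 7 then show ?thesis by (intro ex_to01[of 0 1 1 2]) (simp_all add: transpose_def)
  next
    case 8 then show ?thesis by (intro ex_to01[of 0 2 0 3]) (simp_all add: transpose_def)
  next
    case 9 then show ?thesis by (intro ex_to01[of 0 2 1 3]) (simp_all add: transpose_def)
  next
    case 10 then show ?thesis by (intro ex_to01[of 0 1 1 3]) (simp_all add: transpose_def)
  next
    case 11 then show ?thesis by (intro ex_to01[of 0 2 2 3]) (simp_all add: transpose_def)
  next
    case 12 then show ?thesis by (intro ex_to01[of 0 3 1 2]) (simp_all add: transpose_def)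
  qed
qed

lemma trans_from01:
  assumes "i \<noteq> j" "i < 4" "j < (4::nat)"
  shows "\<exists>g. g permutes {0..<4} \<and> evenperm g \<and> g 0 = i \<and> g 1 = j"
proof -
  consider "i = 0" "j = 1" | "i = 0" "j = 2" | "i = 0" "j = 3" | "i = 1" "j = 0" | "i = 1" "j = 2" | "i = 1" "j = 3" | "i = 2" "j = 0" | "i = 2" "j = 1" | "i = 2" "j = 3" | "i = 3" "j = 0" | "i = 3" "j = 1" | "i = 3" "j = 2"
    using four_cases[OF assms(2)] four_cases[OF assms(3)] assms(1) by (elim disjE) auto
  then show ?thesis
  proof cases
    case 1 then show ?thesis by (intro ex_from01[of 0 1 0 1]) (simp_all add: transpose_def)
  next
    case 2 then show ?thesis by (intro ex_from01[of 1 2 2 3]) (simp_all add: transpose_def)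
  next
    case 3 then show ?thesis by (intro ex_from01[of 1 2 1 3]) (simp_all add: transpose_def)
  next
    case 4 then show ?thesis by (intro ex_from01[of 0 1 2 3]) (simp_all add: transpose_def)
  next
    case 5 then show ?thesis by (intro ex_from01[of 0 1 1 2]) (simp_all add: transpose_def)
  next
    case 6 then show ?thesis by (intro ex_from01[of 0 1 1 3]) (simp_all add: transpose_def)
  next
    case 7 then show ?thesis by (intro ex_from01[of 0 1 0 2]) (simp_all add: transpose_def)
  next
    case 8 then show ?thesis by (intro ex_from01[of 0 2 2 3]) (simp_all add: transpose_def)
  next
    case 9 then show ?thesis by (intro ex_from01[of 0 2 1 3]) (simp_all add: transpose_def)
  next
    case 10 then show ?thesis by (intro ex_from01[of 0 1 0 3]) (simp_all add: transpose_def)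
  next
    case 11 then show ?thesis by (intro ex_from01[of 0 2 0 3]) (simp_all add: transpose_def)
  next
    case 12 then show ?thesis by (intro ex_from01[of 0 3 1 2]) (simp_all add: transpose_def)
  qed
qed

definition Sp :: "nat \<Rightarrow> nat \<Rightarrow> complex \<Rightarrow> complex vec" where
  "Sp i j s = vec 3 (\<lambda>k. if k = i then s else if k = j then inverse s else 1)"

lemma X_Sp:
  assumes "i \<noteq> j" "i < 4" "j < 4" "k < 4" "s \<noteq> 0"
  shows "X (Sp i j s) k = (if k = i then s else if k = j then inverse s else 1)"
proof (cases "k < 3")
  case True then show ?thesis by (simp add: Sp_def X_def)
next
  case False
  then have k: "k = 3" using assms(4) by simp
  show ?thesis
    using four_cases[OF assms(2)] four_cases[OF assms(3)] assms(1,5) k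
    by (elim disjE) (simp_all add: Sp_def X_def)
qed

lemma Sp_car: "s \<noteq> 0 \<Longrightarrow> Sp i j s \<in> T1_carrier"
  by (auto simp: Sp_def intro!: vec_in_T1 split: if_splits)

definition actv :: "(nat \<Rightarrow> nat) \<Rightarrow> complex vec \<Rightarrow> complex vec" where
  "actv g t = vec 3 (\<lambda>j. X t (g j))"
definition mulv :: "complex vec \<Rightarrow> complex vec \<Rightarrow> complex vec" where
  "mulv s t = vec 3 (\<lambda>i. s $ i * t $ i)"
definition invv :: "complex vec \<Rightarrow> complex vec" where
  "invv t = vec 3 (\<lambda>i. inverse (t $ i))"

lemma X_mulv[simp]: "X (mulv s t) i = X s i * X t i" by (simp add: mulv_def X_mult)
lemma X_invv[simp]: "X (invv t) i = inverse (X t i)" by (simp add: invv_def X_inverse)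
lemma X_actv[simp]: "g permutes {0..<4} \<Longrightarrow> t \<in> T1_carrier \<Longrightarrow> i < 4 \<Longrightarrow> X (actv g t) i = X t (g i)"
  by (simp add: actv_def X_act)

definition sig1 :: "nat \<Rightarrow> nat" where "sig1 = transpose 1 2 \<circ> transpose 2 3"
definition sig2 :: "nat \<Rightarrow> nat" where "sig2 = transpose 1 3 \<circ> transpose 2 3"
definition tau :: "nat \<Rightarrow> nat" where "tau = transpose 0 1 \<circ> transpose 2 3"
definition rho :: "nat \<Rightarrow> nat" where "rho = transpose 0 1 \<circ> transpose 1 2"

lemma sig1_ev: "sig1 permutes {0..<4} \<and> evenperm sig1" unfolding sig1_def by (rule even2) auto
lemma sig2_ev: "sig2 permutes {0..<4} \<and> evenperm sig2" unfolding sig2_def by (rule even2) auto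
lemma tau_ev: "tau permutes {0..<4} \<and> evenperm tau" unfolding tau_def by (rule even2) auto
lemma rho_ev: "rho permutes {0..<4} \<and> evenperm rho" unfolding rho_def by (rule even2) auto

lemma sig1_val[simp]: "sig1 0 = 0" "sig1 1 = 2" "sig1 2 = 3" "sig1 3 = 1" "sig1 (Suc 0) = 2" by (simp_all add: sig1_def transpose_def)
lemma sig2_val[simp]: "sig2 0 = 0" "sig2 1 = 3" "sig2 2 = 1" "sig2 3 = 2" "sig2 (Suc 0) = 3" by (simp_all add: sig2_def transpose_def)
lemma tau_val[simp]: "tau 0 = 1" "tau 1 = 0" "tau 2 = 3" "tau 3 = 2" "tau (Suc 0) = 0" by (simp_all add: tau_def transpose_def)
lemma rho_val[simp]: "rho 0 = 1" "rho 1 = 2" "rho 2 = 0" "rho 3 = 3" "rho (Suc 0) = 2" by (simp_all add: rho_def transpose_def)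

lemma aux_p4: "(x::complex) ^ 3 * inverse (inverse x) = x ^ 4" by (simp add: eval_nat_numeral)
lemma aux_p4': "(x::complex) ^ 3 * x = x ^ 4" by (simp add: eval_nat_numeral)
lemma aux_ip4: "inverse (x::complex) * inverse (x ^ 3) = inverse (x ^ 4)"
  by (simp add: eval_nat_numeral inverse_mult_distrib)

lemma mulv_car: "s \<in> T1_carrier \<Longrightarrow> t \<in> T1_carrier \<Longrightarrow> mulv s t \<in> T1_carrier"
  by (auto simp: mulv_def T1_carrier_def)
lemma invv_car: "t \<in> T1_carrier \<Longrightarrow> invv t \<in> T1_carrier"
  by (auto simp: invv_def T1_carrier_def)
lemma actv_car: "g permutes {0..<4} \<Longrightarrow> t \<in> T1_carrier \<Longrightarrow> actv g t \<in> T1_carrier"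
  unfolding actv_def by (rule act_in_T1)

definition ww :: "nat \<Rightarrow> int \<Rightarrow> complex" where
  "ww N a = cis (2 * pi * of_int a / real N)"

lemma ww_add: "ww N a * ww N b = ww N (a + b)"
  by (simp add: ww_def cis_mult add_divide_distrib distrib_left)

lemma ww_pow: "ww N a ^ n = ww N (int n * a)"
  by (simp add: ww_def DeMoivre mult_ac)

lemma ww_nz: "ww N a \<noteq> 0"
  by (simp add: ww_def)

lemma ww_one: assumes "N > 0" shows "ww N c = 1 \<longleftrightarrow> int N dvd c"
proof
  assume "ww N c = 1"
  then obtain n where n: "2 * pi * of_int c / real N = of_int n * (2 * pi)"
    by (auto simp: ww_def cis_eq_1_iff)
  then have "of_int c = real N * of_int n" using assms by (simp add: field_simps)
  then have "c = int N * n" by (metis of_int_eq_iff of_int_mult of_int_of_nat_eq)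
  then show "int N dvd c" by simp
next
  assume "int N dvd c"
  then obtain n where "c = int N * n" by (auto elim: dvdE)
  then have "2 * pi * of_int c / real N = of_int n * (2 * pi)" using assms by (simp add: field_simps)
  then show "ww N c = 1" by (auto simp: ww_def cis_eq_1_iff)
qed

lemma ww_eq: assumes "N > 0" shows "ww N a = ww N b \<longleftrightarrow> int N dvd (a - b)"
proof -
  have "ww N a = ww N (a - b) * ww N b" by (simp add: ww_add)
  then have "ww N a = ww N b \<longleftrightarrow> ww N (a - b) = 1" using ww_nz[of N b] by auto
  then show ?thesis using ww_one[OF assms] by simp
qed

lemma ww_root: assumes "N > 0" "z ^ N = 1" shows "\<exists>a \<in> {0..<int N}. z = ww N a"
proof -
  have "z \<in> (\<lambda>k. cis (2 * pi * real k / real N)) ` {..<N}"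
    using bij_betw_imp_surj_on[OF bij_betw_roots_unity[OF assms(1)]] assms(2) by auto
  then obtain k where "k < N" "z = cis (2 * pi * real k / real N)" by auto
  then show ?thesis by (intro bexI[of _ "int k"]) (auto simp: ww_def)
qed

lemma mod_diff_dvd: "(n::int) dvd (a mod n - a)"
  by (simp add: mod_eq_dvd_iff[symmetric])

lemma small_eq: "0 \<le> a \<Longrightarrow> a < n \<Longrightarrow> 0 \<le> b \<Longrightarrow> b < n \<Longrightarrow> (n::int) dvd (a - b) \<Longrightarrow> a = b"
  by (metis mod_eq_dvd_iff mod_pos_pos_trivial)

definition phi :: "nat \<Rightarrow> nat \<Rightarrow> int \<times> int \<times> int \<Rightarrow> complex vec" where
  "phi k m x = vec 3 (\<lambda>i. if i = 0 then ww (k * m) (fst x + int k * fst (snd x))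
     else if i = 1 then ww (k * m) (fst x + int k * snd (snd x)) else ww (k * m) (fst x))"

lemma iso_G:
  fixes G :: "complex vec set" and k m :: nat
  assumes k: "k > 0" and m: "m > 0"
    and G_eq: "G = {t \<in> T1_carrier. \<exists>e. e ^ k = 1 \<and> (\<forall>i<3. t $ i ^ m = e)}"
  shows "T1\<lparr>carrier := G\<rparr> \<cong> mu (k * m) \<times>\<times> mu m \<times>\<times> mu m"
proof -
  define N where "N = k * m"
  have N: "N > 0" using k m by (simp add: N_def)
  let ?A = "mu N \<times>\<times> mu m \<times>\<times> mu m"
  have carA: "carrier ?A = {0..<int N} \<times> {0..<int m} \<times> {0..<int m}"
    using N m by (simp add: carrier_integer_mod_group)
  have cong_mod: "ww N (a mod int N) = ww N a" for a using ww_eq[OF N] mod_diff_dvd by blast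
  have cong_k: "ww N (c + int k * (b mod int m)) = ww N (c + int k * b)" for b c
  proof -
    have "int m dvd (b mod int m - b)" by (rule mod_diff_dvd)
    then have "int k * int m dvd int k * (b mod int m - b)" by simp
    then have "int N dvd (c + int k * (b mod int m) - (c + int k * b))"
      by (simp add: N_def algebra_simps)
    then show ?thesis using ww_eq[OF N] by blast
  qed
  have phi_eq: "phi k m x = vec 3 (\<lambda>i. if i = 0 then ww N (fst x + int k * fst (snd x))
     else if i = 1 then ww N (fst x + int k * snd (snd x)) else ww N (fst x))" for x
    unfolding phi_def N_def by (rule refl)
  have inG: "phi k m x \<in> G" for x
  proof -
    obtain u v w where x: "x = (u, v, w)" by (cases x) auto
    have mpow: "ww N (u + int k * c) ^ m = ww N (int m * u)" for c
    proof -
      have "ww N (u + int k * c) ^ m = ww N (int m * (u + int k * c))" by (rule ww_pow)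
      also have "\<dots> = ww N (int m * u)"
      proof -
        have "int N dvd (int m * (u + int k * c) - int m * u)" by (simp add: N_def algebra_simps)
        then show ?thesis using ww_eq[OF N] by blast
      qed
      finally show ?thesis .
    qed
    have e: "ww N (int m * u) ^ k = 1"
    proof -
      have "ww N (int m * u) ^ k = ww N (int k * (int m * u))" by (rule ww_pow)
      also have "\<dots> = ww N (int N * u)" by (simp add: N_def mult.assoc)
      also have "\<dots> = 1" using ww_one[OF N] by simp
      finally show ?thesis .
    qed
    show ?thesis unfolding G_eq
    proof (intro CollectI conjI exI[of _ "ww N (int m * u)"] allI impI)
      show "phi k m x \<in> T1_carrier" by (auto simp: phi_eq ww_nz T1_carrier_def)
      show "ww N (int m * u) ^ k = 1" by (rule e)
      fix i :: nat assume "i < 3"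
      then have "i = 0 \<or> i = 1 \<or> i = 2" by auto
      then show "phi k m x $ i ^ m = ww N (int m * u)"
        using mpow[of v] mpow[of w] mpow[of 0] by (auto simp: phi_eq x)
    qed
  qed
  have hom: "phi k m \<in> hom ?A (T1\<lparr>carrier := G\<rparr>)"
  proof (rule homI)
    fix x assume "x \<in> carrier ?A" then show "phi k m x \<in> carrier (T1\<lparr>carrier := G\<rparr>)" using inG by simp
  next
    fix x y assume x: "x \<in> carrier ?A" and y: "y \<in> carrier ?A"
    obtain u1 v1 w1 where x1: "x = (u1, v1, w1)" by (cases x) auto
    obtain u2 v2 w2 where y1: "y = (u2, v2, w2)" by (cases y) auto
    have xy: "x \<otimes>\<^bsub>?A\<^esub> y = ((u1 + u2) mod int N, (v1 + v2) mod int m, (w1 + w2) mod int m)"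
      by (simp add: x1 y1)
    have c1: "ww N ((u1 + u2) mod int N + int k * ((v1 + v2) mod int m)) = ww N (u1 + int k * v1) * ww N (u2 + int k * v2)" for v1 v2
    proof -
      have "ww N ((u1 + u2) mod int N + int k * ((v1 + v2) mod int m)) = ww N ((u1 + u2) mod int N + int k * (v1 + v2))"
        by (rule cong_k)
      also have "\<dots> = ww N ((u1 + u2) mod int N) * ww N (int k * (v1 + v2))" by (simp add: ww_add)
      also have "\<dots> = ww N (u1 + u2) * ww N (int k * (v1 + v2))" by (simp add: cong_mod)
      also have "\<dots> = ww N (u1 + int k * v1) * ww N (u2 + int k * v2)" by (simp add: ww_add algebra_simps)
      finally show ?thesis .
    qed
    show "phi k m (x \<otimes>\<^bsub>?A\<^esub> y) = phi k m x \<otimes>\<^bsub>T1\<lparr>carrier := G\<rparr>\<^esub> phi k m y"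
    proof (rule eq_vecI)
      fix i assume "i < dim_vec (phi k m x \<otimes>\<^bsub>T1\<lparr>carrier := G\<rparr>\<^esub> phi k m y)"
      then have "i < 3" by (simp add: T1_def)
      then have "i = 0 \<or> i = 1 \<or> i = 2" by auto
      then show "phi k m (x \<otimes>\<^bsub>?A\<^esub> y) $ i = (phi k m x \<otimes>\<^bsub>T1\<lparr>carrier := G\<rparr>\<^esub> phi k m y) $ i"
        using c1[of v1 v2] c1[of w1 w2] by (auto simp: xy phi_eq x1 y1 T1_def cong_mod ww_add)
    qed (simp add: T1_def phi_eq)
  qed
  have inj: "inj_on (phi k m) (carrier ?A)"
  proof (rule inj_onI)
    fix x y assume x: "x \<in> carrier ?A" and y: "y \<in> carrier ?A" and e: "phi k m x = phi k m y"
    obtain u1 v1 w1 where x1: "x = (u1, v1, w1)" by (cases x) auto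
    obtain u2 v2 w2 where y1: "y = (u2, v2, w2)" by (cases y) auto
    have r: "0 \<le> u1" "u1 < int N" "0 \<le> u2" "u2 < int N" "0 \<le> v1" "v1 < int m" "0 \<le> v2" "v2 < int m"
       "0 \<le> w1" "w1 < int m" "0 \<le> w2" "w2 < int m"
    proof -
      have cN: "carrier (mu N) = {0..<int N}" using N by (simp add: carrier_integer_mod_group)
      have cm: "carrier (mu m) = {0..<int m}" using m by (simp add: carrier_integer_mod_group)
      have "x \<in> carrier (mu N) \<times> carrier (mu m) \<times> carrier (mu m)" using x by simp
      then have xr: "u1 \<in> {0..<int N}" "v1 \<in> {0..<int m}" "w1 \<in> {0..<int m}"
        unfolding x1 cN cm mem_Times_iff by simp_all
      have "y \<in> carrier (mu N) \<times> carrier (mu m) \<times> carrier (mu m)" using y by simp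
      then have yr: "u2 \<in> {0..<int N}" "v2 \<in> {0..<int m}" "w2 \<in> {0..<int m}"
        unfolding y1 cN cm mem_Times_iff by simp_all
      show "0 \<le> u1" "u1 < int N" "0 \<le> u2" "u2 < int N" "0 \<le> v1" "v1 < int m" "0 \<le> v2" "v2 < int m"
       "0 \<le> w1" "w1 < int m" "0 \<le> w2" "w2 < int m" using xr yr by simp_all
    qed
    have e2: "ww N u1 = ww N u2" using arg_cong[OF e, of "\<lambda>t. t $ 2"] by (simp add: phi_eq x1 y1)
    have "int N dvd (u1 - u2)" using e2 ww_eq[OF N] by simp
    then have u: "u1 = u2" by (rule small_eq[OF r(1-4)])
    have e0: "ww N (u1 + int k * v1) = ww N (u1 + int k * v2)" using arg_cong[OF e, of "\<lambda>t. t $ 0"] u by (simp add: phi_eq x1 y1)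
    have e1: "ww N (u1 + int k * w1) = ww N (u1 + int k * w2)" using arg_cong[OF e, of "\<lambda>t. t $ 1"] u by (simp add: phi_eq x1 y1)
    have dv: "int m dvd (c1 - c2)" if "ww N (u1 + int k * c1) = ww N (u1 + int k * c2)" for c1 c2
    proof -
      have "int N dvd (u1 + int k * c1 - (u1 + int k * c2))" using that ww_eq[OF N] by simp
      then have "int k * int m dvd int k * (c1 - c2)" by (simp add: N_def algebra_simps)
      then show ?thesis using k by simp
    qed
    have "v1 = v2" by (rule small_eq[OF r(5-8) dv[OF e0]])
    moreover have "w1 = w2" by (rule small_eq[OF r(9-12) dv[OF e1]])
    ultimately show "x = y" using u by (simp add: x1 y1)
  qed
  have surj: "phi k m ` carrier ?A = G"
  proof (intro equalityI subsetI)
    fix t assume "t \<in> phi k m ` carrier ?A" then show "t \<in> G" using inG by auto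
  next
    fix t assume tG: "t \<in> G"
    then obtain e where tc: "t \<in> T1_carrier" and e: "e ^ k = 1" and te: "\<And>i. i < 3 \<Longrightarrow> t $ i ^ m = e"
      unfolding G_eq by blast
    have rootN: "t $ i ^ N = 1" if "i < 3" for i
    proof -
      have "t $ i ^ N = (t $ i ^ m) ^ k" by (simp add: N_def power_mult[symmetric] mult.commute)
      then show ?thesis using te[OF that] e by simp
    qed
    have "\<forall>i. \<exists>b. i < 3 \<longrightarrow> b \<in> {0..<int N} \<and> t $ i = ww N b"
      using ww_root[OF N rootN] by blast
    then obtain a where a0: "\<forall>i. i < 3 \<longrightarrow> a i \<in> {0..<int N} \<and> t $ i = ww N (a i)"
      using choice[of "\<lambda>i b. i < 3 \<longrightarrow> b \<in> {0..<int N} \<and> t $ i = ww N b"] by blast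
    have a: "a i \<in> {0..<int N} \<and> t $ i = ww N (a i)" if "i < 3" for i using a0 that by blast
    have ae: "ww N (int m * a i) = e" if "i < 3" for i
      using te[OF that] a[OF that] ww_pow[of N "a i" m] by simp
    have kd: "int k dvd (a i - a 2)" if "i < 3" for i
    proof -
      have "ww N (int m * a i) = ww N (int m * a 2)" using ae[OF that] ae[of 2] by simp
      then have "int N dvd (int m * a i - int m * a 2)" using ww_eq[OF N] by blast
      then have "int m * int k dvd int m * (a i - a 2)" by (simp add: N_def algebra_simps)
      then show ?thesis using m by simp
    qed
    define q where "q i = (a i - a 2) div int k" for i
    have qa: "a i = a 2 + int k * q i" if "i < 3" for i using kd[OF that] by (simp add: q_def)
    define x where "x = (a 2, q 0 mod int m, q 1 mod int m)"
    have xA: "x \<in> carrier ?A" using a[of 2] m N by (simp add: x_def carrier_integer_mod_group)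
    have "phi k m x = t"
    proof (rule eq_vecI)
      fix i assume "i < dim_vec t"
      then have "i < 3" using tc by (simp add: T1_carrier_def)
      then have "i = 0 \<or> i = 1 \<or> i = 2" by auto
      moreover have "phi k m x $ 0 = t $ 0"
      proof -
        have "phi k m x $ 0 = ww N (a 2 + int k * (q 0 mod int m))" by (simp add: phi_eq x_def)
        also have "\<dots> = ww N (a 2 + int k * q 0)" by (rule cong_k)
        also have "\<dots> = t $ 0" using qa[of 0] a[of 0] by simp
        finally show ?thesis .
      qed
      moreover have "phi k m x $ 1 = t $ 1"
      proof -
        have "phi k m x $ 1 = ww N (a 2 + int k * (q 1 mod int m))" by (simp add: phi_eq x_def)
        also have "\<dots> = ww N (a 2 + int k * q 1)" by (rule cong_k)
        also have "\<dots> = t $ 1" using qa[of 1] a[of 1] by simp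
        finally show ?thesis .
      qed
      moreover have "phi k m x $ 2 = t $ 2" using a[of 2] by (simp add: phi_eq x_def)
      ultimately show "phi k m x $ i = t $ i" by auto
    qed (use tc in \<open>simp add: phi_eq T1_carrier_def\<close>)
    then show "t \<in> phi k m ` carrier ?A" using xA by blast
  qed
  have "phi k m \<in> iso ?A (T1\<lparr>carrier := G\<rparr>)"
    using hom inj surj by (simp add: iso_def bij_betw_def)
  then have "?A \<cong> T1\<lparr>carrier := G\<rparr>" by (rule is_isoI)
  moreover have "group ?A" by (simp add: DirProd_group)
  ultimately have "T1\<lparr>carrier := G\<rparr> \<cong> ?A"
    using group.iso_sym by blast
  then show ?thesis by (simp add: N_def)
qed

lemma fin_roots:
  fixes K :: "complex set"
  assumes fin: "finite K" and one: "1 \<in> K" and nz: "0 \<notin> K"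
    and mul: "\<And>x y. x \<in> K \<Longrightarrow> y \<in> K \<Longrightarrow> x * y \<in> K"
  shows "K = {z. z ^ card K = 1}" "card K \<ge> 1"
proof -
  have "card K \<noteq> 0" using fin one by auto
  then show c1: "card K \<ge> 1" by simp
  have pw: "s ^ card K = 1" if s: "s \<in> K" for s
  proof -
    have s0: "s \<noteq> 0" using s nz by auto
    have inj: "inj_on (\<lambda>x. s * x) K" using s0 by (auto simp: inj_on_def)
    have img: "(\<lambda>x. s * x) ` K = K"
      by (rule endo_inj_surj[OF fin _ inj]) (use mul s in auto)
    have "prod (\<lambda>x. x) K = prod (\<lambda>x. x) ((\<lambda>x. s * x) ` K)" using img by simp
    also have "\<dots> = prod (\<lambda>x. s * x) K" by (subst prod.reindex[OF inj]) simp
    also have "\<dots> = s ^ card K * prod (\<lambda>x. x) K" by (simp add: prod.distrib)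
    finally have "s ^ card K * prod (\<lambda>x. x) K = 1 * prod (\<lambda>x. x) K" by simp
    moreover have "prod (\<lambda>x. x) K \<noteq> 0" using fin nz by (auto simp: prod_zero_iff)
    ultimately show ?thesis by (metis mult_cancel_right)
  qed
  have sub: "K \<subseteq> {z. z ^ card K = 1}" using pw by auto
  have "card {z::complex. z ^ card K = 1} \<le> card K" using card_roots_unity c1 by blast
  then show "K = {z. z ^ card K = 1}"
    using card_subset_eq[OF finite_roots_unity[OF c1] sub] card_mono[OF finite_roots_unity[OF c1] sub]
    by simp
qed

definition powv :: "nat \<Rightarrow> complex vec \<Rightarrow> complex vec" where
  "powv n t = vec 3 (\<lambda>i. t $ i ^ n)"

lemma X_powv[simp]: "X (powv n t) k = X t k ^ n"
  by (simp add: powv_def X_def power_mult_distrib power_inverse)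

lemma powv_idx[simp]: "i < 3 \<Longrightarrow> powv n t $ i = t $ i ^ n" "dim_vec (powv n t) = 3"
  by (simp_all add: powv_def)

lemma powv_car: "t \<in> T1_carrier \<Longrightarrow> powv n t \<in> T1_carrier"
  by (auto simp: powv_def T1_carrier_def)

locale invclosed =
  fixes G :: "complex vec set"
  assumes car: "\<And>t. t \<in> G \<Longrightarrow> t \<in> T1_carrier"
  and Gmult: "\<And>s t. s \<in> G \<Longrightarrow> t \<in> G \<Longrightarrow> vec 3 (\<lambda>i. s $ i * t $ i) \<in> G"
  and Ginv: "\<And>t. t \<in> G \<Longrightarrow> vec 3 (\<lambda>i. inverse (t $ i)) \<in> G"
  and Gact: "\<And>g t. g permutes {0..<4} \<Longrightarrow> evenperm g \<Longrightarrow> t \<in> G \<Longrightarrow> vec 3 (\<lambda>j. X t (g j)) \<in> G"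
begin

lemma Gact2: "a \<noteq> b \<Longrightarrow> c \<noteq> d \<Longrightarrow> a < 4 \<Longrightarrow> b < 4 \<Longrightarrow> c < 4 \<Longrightarrow> d < 4 \<Longrightarrow> t \<in> G
   \<Longrightarrow> vec 3 (\<lambda>j. X t ((transpose a b \<circ> transpose c d) j)) \<in> G"
  using Gact even2 by blast

lemma G_eqI: "q \<in> G \<Longrightarrow> p \<in> T1_carrier \<Longrightarrow> (\<And>i. i < 3 \<Longrightarrow> X p i = X q i) \<Longrightarrow> p \<in> G"
  using X_eqI car by metis

lemma Sp_move:
  assumes g: "g permutes {0..<4}" "evenperm g" and ij: "i \<noteq> j" "i < 4" "j < 4"
    and ij': "i' \<noteq> j'" "i' < 4" "j' < 4" "g i' = i" "g j' = j"
    and s: "s \<noteq> 0" "Sp i j s \<in> G"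
  shows "Sp i' j' s \<in> G"
proof (rule G_eqI[OF Gact[OF g s(2)] Sp_car[OF s(1)]])
  fix k :: nat assume k: "k < 3"
  have inj: "inj g" using g(1) permutes_inj by blast
  have gk: "g k < 4" using perm_lt4[OF g(1)] k by simp
  have "X (vec 3 (\<lambda>l. X (Sp i j s) (g l))) k = X (Sp i j s) (g k)" using k by (simp add: X_def)
  also have "\<dots> = (if g k = i then s else if g k = j then inverse s else 1)" using X_Sp[OF ij gk s(1)] .
  also have "\<dots> = (if k = i' then s else if k = j' then inverse s else 1)"
    using ij' inj by (auto dest: injD)
  also have "\<dots> = X (Sp i' j' s) k" using X_Sp[OF ij'(1-3), of k] k s(1) by simp
  finally show "X (Sp i' j' s) k = X (vec 3 (\<lambda>l. X (Sp i j s) (g l))) k" by simp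
qed

lemma Sp_trans:
  assumes ij: "i \<noteq> j" "i < 4" "j < 4" and ij': "i' \<noteq> j'" "i' < 4" "j' < 4"
    and s: "s \<noteq> 0" "Sp i j s \<in> G"
  shows "Sp i' j' s \<in> G"
proof -
  obtain g where g: "g permutes {0..<4}" "evenperm g" "g 0 = i" "g 1 = j"
    using trans_from01[OF ij] by blast
  have "Sp 0 1 s \<in> G" using Sp_move[OF g(1,2) ij, of 0 1] g(3,4) s by auto
  obtain h where h: "h permutes {0..<4}" "evenperm h" "h i' = 0" "h j' = 1"
    using trans_to01[OF ij'] by blast
  show ?thesis using Sp_move[OF h(1,2), of 0 1 i' j' s] ij' h(3,4) s(1) \<open>Sp 0 1 s \<in> G\<close> by auto
qed

lemma Gmulv: "s \<in> G \<Longrightarrow> t \<in> G \<Longrightarrow> mulv s t \<in> G" unfolding mulv_def by (rule Gmult)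
lemma Ginvv: "t \<in> G \<Longrightarrow> invv t \<in> G" unfolding invv_def by (rule Ginv)
lemma Gactv: "g permutes {0..<4} \<and> evenperm g \<Longrightarrow> t \<in> G \<Longrightarrow> actv g t \<in> G" unfolding actv_def using Gact by blast

definition K :: "complex set" where "K = {s. s \<noteq> 0 \<and> Sp 0 3 s \<in> G}"

lemma K_mult: "s \<in> K \<Longrightarrow> r \<in> K \<Longrightarrow> s * r \<in> K"
proof -
  assume s: "s \<in> K" and r: "r \<in> K"
  have "vec 3 (\<lambda>i. Sp 0 3 s $ i * Sp 0 3 r $ i) \<in> G" using s r by (auto simp: K_def intro: Gmult)
  moreover have "vec 3 (\<lambda>i. Sp 0 3 s $ i * Sp 0 3 r $ i) = Sp 0 3 (s * r)"
    by (rule eq_vecI) (auto simp: Sp_def)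
  ultimately show "s * r \<in> K" using s r by (auto simp: K_def)
qed

lemma K_pair:
  assumes a: "i \<noteq> j" "i < 4" "j < 4" "s \<noteq> 0"
  shows "Sp i j s \<in> G \<longleftrightarrow> s \<in> K"
proof
  assume h: "Sp i j s \<in> G"
  have "Sp 0 3 s \<in> G" using Sp_trans[OF a(1-3), of 0 3 s] a(4) h by simp
  then show "s \<in> K" using a by (simp add: K_def)
next
  assume "s \<in> K"
  then have h: "Sp 0 3 s \<in> G" by (simp add: K_def)
  show "Sp i j s \<in> G" using Sp_trans[of 0 3 i j s] a h by simp
qed

end

locale invtriv = invclosed +
  assumes triv: "\<And>s. s \<noteq> 0 \<Longrightarrow> Sp 0 3 s \<in> G \<Longrightarrow> s = 1"
begin

lemma Sp_triv: "i \<noteq> j \<Longrightarrow> i < 4 \<Longrightarrow> j < 4 \<Longrightarrow> s \<noteq> 0 \<Longrightarrow> Sp i j s \<in> G \<Longrightarrow> s = 1"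
proof -
  assume a: "i \<noteq> j" "i < 4" "j < 4" "s \<noteq> 0" "Sp i j s \<in> G"
  then have "s \<in> K" using K_pair[OF a(1-4)] by simp
  then show "s = 1" using triv unfolding K_def by blast
qed

lemma bvals:
  assumes t: "t \<in> G"
  defines "b \<equiv> mulv (mulv t (actv sig1 t)) (actv sig2 t)"
  shows "b \<in> G" "X b 0 = X t 0 ^ 3" "X b 1 = inverse (X t 0)" "X b 2 = inverse (X t 0)" "X b 3 = inverse (X t 0)"
proof -
  have tc: "t \<in> T1_carrier" using car t .
  have p: "X t 0 * X t 1 * X t 2 * X t 3 = 1" using X_prod[OF tc] .
  have nz: "X t 0 \<noteq> 0" using X_nz[OF tc] by simp
  have h: "X t 1 * X t 2 * X t 3 = inverse (X t 0)" using p nz by (simp add: field_simps)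
  show "b \<in> G" unfolding b_def using t sig1_ev sig2_ev by (intro Gmulv Gactv) auto
  show "X b 0 = X t 0 ^ 3" using sig1_ev sig2_ev tc by (simp add: b_def power3_eq_cube)
  show "X b 1 = inverse (X t 0)" using sig1_ev sig2_ev tc h by (simp add: b_def)
  show "X b 2 = inverse (X t 0)" using sig1_ev sig2_ev tc h by (simp add: b_def mult_ac)
  show "X b 3 = inverse (X t 0)" using sig1_ev sig2_ev tc h by (simp add: b_def mult_ac)
qed

lemma pow4: assumes t: "t \<in> G" shows "X t 0 ^ 4 = 1"
proof -
  define b where "b \<equiv> mulv (mulv t (actv sig1 t)) (actv sig2 t)"
  note bv = bvals[OF t, folded b_def]
  have tc: "t \<in> T1_carrier" using car t .
  have bc: "b \<in> T1_carrier" using car bv(1) .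
  have nz: "X t 0 \<noteq> 0" using X_nz[OF tc] by simp
  define c where "c = mulv b (invv (actv tau b))"
  have cG: "c \<in> G" unfolding c_def using bv(1) tau_ev by (intro Gmulv Ginvv Gactv) auto
  have x4: "X t 0 ^ 4 \<noteq> 0" using nz by simp
  have "Sp 0 1 (X t 0 ^ 4) = c"
  proof (rule X_eqI[OF Sp_car[OF x4] car[OF cG]])
    fix k :: nat assume k: "k < 3"
    then consider "k = 0" | "k = 1" | "k = 2" by linarith
    then show "X (Sp 0 1 (X t 0 ^ 4)) k = X c k"
    proof cases
      case 1 then show ?thesis using tau_ev bc bv nz by (simp add: c_def X_Sp aux_p4')
    next
      case 2 then show ?thesis using tau_ev bc bv nz by (simp add: c_def X_Sp aux_ip4)
    next
      case 3 then show ?thesis using tau_ev bc bv nz by (simp add: c_def X_Sp)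
    qed
  qed
  then show ?thesis using Sp_triv[of 0 1 "X t 0 ^ 4"] cG x4 by simp
qed

lemma normalize:
  assumes t: "t \<in> G"
  obtains t' where "t' \<in> G" "X t' 0 = 1" "\<And>k. k < 4 \<Longrightarrow> X t' k = X t k * inverse (X t 0)"
proof -
  define b where "b \<equiv> mulv (mulv t (actv sig1 t)) (actv sig2 t)"
  note bv = bvals[OF t, folded b_def]
  have tc: "t \<in> T1_carrier" using car t .
  have nz: "X t 0 \<noteq> 0" using X_nz[OF tc] by simp
  have p4: "X t 0 ^ 4 = 1" using pow4[OF t] .
  have b0: "X t 0 ^ 3 = inverse (X t 0)" using p4 nz by (simp add: field_simps eval_nat_numeral)
  have bk: "X b k = inverse (X t 0)" if "k < 4" for k
  proof -
    have "k = 0 \<or> k = 1 \<or> k = 2 \<or> k = 3" using that by auto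
    then show ?thesis using bv b0 by auto
  qed
  show ?thesis
  proof (rule that[of "mulv t b"])
    show "mulv t b \<in> G" using t bv(1) by (rule Gmulv)
    show "X (mulv t b) 0 = 1" using bk[of 0] nz by simp
    show "X (mulv t b) k = X t k * inverse (X t 0)" if "k < 4" for k using bk[OF that] by simp
  qed
qed

lemma sq1:
  assumes t: "t \<in> G" and t0: "X t 0 = 1"
  shows "X t 1 ^ 2 = 1"
proof -
  have tc: "t \<in> T1_carrier" using car t .
  have nz: "X t 1 \<noteq> 0" using X_nz[OF tc] by simp
  have prod: "X t 1 * X t 2 * X t 3 = 1" using X_prod[OF tc] t0 by simp
  have vw: "X t 2 * X t 3 = inverse (X t 1)" using prod nz by (simp add: field_simps)
  define p where "p = mulv t (actv tau t)"
  have pG: "p \<in> G" unfolding p_def using t tau_ev by (intro Gmulv Gactv) auto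
  have pc: "p \<in> T1_carrier" using car pG .
  have p0: "X p 0 = X t 1" using tau_ev tc t0 by (simp add: p_def)
  have p1: "X p 1 = X t 1" using tau_ev tc t0 by (simp add: p_def)
  have p2: "X p 2 = inverse (X t 1)" using tau_ev tc vw by (simp add: p_def)
  define q where "q = mulv p (actv rho p)"
  have qG: "q \<in> G" unfolding q_def using pG rho_ev by (intro Gmulv Gactv) auto
  have sq: "X t 1 ^ 2 \<noteq> 0" using nz by simp
  have "Sp 0 3 (X t 1 ^ 2) = q"
  proof (rule X_eqI[OF Sp_car[OF sq] car[OF qG]])
    fix k :: nat assume k: "k < 3"
    then consider "k = 0" | "k = 1" | "k = 2" by linarith
    then show "X (Sp 0 3 (X t 1 ^ 2)) k = X q k"
    proof cases
      case 1 then show ?thesis using rho_ev pc p0 p1 X_Sp[of 0 3 0 "X t 1 ^ 2"] sq by (simp add: q_def power2_eq_square)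
    next
      case 2 then show ?thesis using rho_ev pc p1 p2 nz by (simp add: q_def X_Sp)
    next
      case 3 then show ?thesis using rho_ev pc p0 p2 nz by (simp add: q_def X_Sp)
    qed
  qed
  then show ?thesis using triv[of "X t 1 ^ 2"] qG sq by simp
qed

lemma sq_all:
  assumes t: "t \<in> G" and t0: "X t 0 = 1"
  shows "X t 1 ^ 2 = 1" "X t 2 ^ 2 = 1" "X t 3 ^ 2 = 1"
proof -
  have tc: "t \<in> T1_carrier" using car t .
  show "X t 1 ^ 2 = 1" by (rule sq1[OF t t0])
  have "actv sig1 t \<in> G" using t sig1_ev by (intro Gactv) auto
  moreover have "X (actv sig1 t) 0 = 1" "X (actv sig1 t) 1 = X t 2" using sig1_ev tc t0 by simp_all
  ultimately show "X t 2 ^ 2 = 1" using sq1 by metis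
  have "actv sig2 t \<in> G" using t sig2_ev by (intro Gactv) auto
  moreover have "X (actv sig2 t) 0 = 1" "X (actv sig2 t) 1 = X t 3" using sig2_ev tc t0 by simp_all
  ultimately show "X t 3 ^ 2 = 1" using sq1 by metis
qed

lemma no_minus:
  assumes t: "t \<in> G" and ij: "i \<noteq> j" "i < 4" "j < 4"
    and v: "\<And>k. k < 3 \<Longrightarrow> X t k = (if k = i then -1 else if k = j then -1 else 1)"
  shows False
proof -
  have m1: "(-1::complex) \<noteq> 0" by simp
  have "Sp i j (-1) = t"
  proof (rule X_eqI[OF Sp_car[OF m1] car[OF t]])
    fix k :: nat assume k: "k < 3"
    show "X (Sp i j (-1)) k = X t k" using X_Sp[OF ij, of k "-1"] v[OF k] k by simp
  qed
  then have "(-1::complex) = 1" using Sp_triv[OF ij m1] t by simp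
  then show False by simp
qed

lemma diag:
  assumes t: "t \<in> G" and k: "k < 4"
  shows "X t k = X t 0"
proof -
  obtain t' where t': "t' \<in> G" "X t' 0 = 1" "\<And>k. k < 4 \<Longrightarrow> X t' k = X t k * inverse (X t 0)"
    using normalize[OF t] by blast
  have tc: "t' \<in> T1_carrier" using car t'(1) .
  have prod: "X t' 1 * X t' 2 * X t' 3 = 1" using X_prod[OF tc] t'(2) by simp
  note sq = sq_all[OF t'(1,2)]
  have pm: "z = 1 \<or> z = -1" if "z ^ 2 = 1" for z :: complex using that by (simp add: power2_eq_1_iff)
  have mk: False if ij: "i \<noteq> j" "i < 4" "j < 4" "i \<noteq> 0" "j \<noteq> 0"
     and v1: "X t' 1 = (if 1 = i then -1 else if 1 = j then -1 else 1)"
     and v2: "X t' 2 = (if 2 = i then -1 else if 2 = j then -1 else 1)" for i j :: nat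
  proof (rule no_minus[OF t'(1) ij(1-3)])
    fix k :: nat assume "k < 3"
    then have "k = 0 \<or> k = 1 \<or> k = 2" by auto
    then show "X t' k = (if k = i then -1 else if k = j then -1 else 1)"
      using v1 v2 t'(2) ij(4,5) by auto
  qed
  have all1: "X t' 1 = 1 \<and> X t' 2 = 1 \<and> X t' 3 = 1"
  proof -
    have "X t' 1 = 1 \<or> X t' 1 = -1" "X t' 2 = 1 \<or> X t' 2 = -1" "X t' 3 = 1 \<or> X t' 3 = -1"
      using pm sq by blast+
    then show ?thesis
    proof (elim disjE)
      assume "X t' 1 = 1" "X t' 2 = -1" "X t' 3 = -1"
      then show ?thesis using mk[of 2 3] by simp
    next
      assume "X t' 1 = -1" "X t' 2 = 1" "X t' 3 = -1"
      then show ?thesis using mk[of 1 3] by simp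
    next
      assume "X t' 1 = -1" "X t' 2 = -1" "X t' 3 = 1"
      then show ?thesis using mk[of 1 2] by simp
    qed (use prod in auto)
  qed
  have "k = 0 \<or> k = 1 \<or> k = 2 \<or> k = 3" using k by auto
  then have "X t' k = 1" using all1 t'(2) by auto
  moreover have "X t 0 \<noteq> 0" using X_nz[OF car[OF t]] by simp
  ultimately show ?thesis using t'(3)[OF k] by (simp add: field_simps)
qed

end

locale invsub =
  fixes G :: "complex vec set"
  assumes sub: "subgroup G T1"
  and invar: "\<And>g t. g permutes {0..<4} \<Longrightarrow> evenperm g \<Longrightarrow> t \<in> G \<Longrightarrow> T1_act (perm_mat g) t \<in> G"
  and fin: "finite G"
begin

sublocale invclosed G
proof
  show "\<And>t. t \<in> G \<Longrightarrow> t \<in> T1_carrier" using subgroup.subset[OF sub] by auto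
  show "\<And>s t. s \<in> G \<Longrightarrow> t \<in> G \<Longrightarrow> vec 3 (\<lambda>i. s $ i * t $ i) \<in> G"
    using subgroup.m_closed[OF sub] by fastforce
  show "\<And>t. t \<in> G \<Longrightarrow> vec 3 (\<lambda>i. inverse (t $ i)) \<in> G"
    using subgroup.m_inv_closed[OF sub] T1_inv subgroup.subset[OF sub] by fastforce
  show "\<And>g t. g permutes {0..<4} \<Longrightarrow> evenperm g \<Longrightarrow> t \<in> G \<Longrightarrow> vec 3 (\<lambda>j. X t (g j)) \<in> G"
    using invar act_eq by metis
qed

lemma Gone: "vec 3 (\<lambda>_. 1) \<in> G"
  using subgroup.one_closed[OF sub] by fastforce

definition m :: nat where "m = card K"

lemma K_fin: "finite K"
proof -
  have "K \<subseteq> (\<lambda>t. t $ 0) ` G" by (force simp: K_def Sp_def)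
  then show ?thesis using fin finite_subset by blast
qed

lemma K_one: "1 \<in> K"
proof -
  have "Sp 0 3 1 = vec 3 (\<lambda>_. 1)" by (rule eq_vecI) (auto simp: Sp_def)
  then show ?thesis using Gone by (simp add: K_def)
qed

lemma K_roots: "K = {z. z ^ m = 1}" and m_pos: "m \<ge> 1"
  using fin_roots[OF K_fin K_one _ K_mult] by (auto simp: K_def m_def)

lemma Tm_sub:
  assumes t: "dim_vec t = 3" and r: "\<And>i. i < 3 \<Longrightarrow> t $ i ^ m = 1"
  shows "t \<in> G"
proof -
  have nz: "t $ i \<noteq> 0" if "i < 3" for i using r[OF that] m_pos by (cases "t $ i = 0") (auto simp: power_0_left)
  have inK: "t $ i \<in> K" if "i < 3" for i using r[OF that] K_roots by auto
  have s: "Sp i 3 (t $ i) \<in> G" if "i < 3" for i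
    using K_pair[of i 3 "t $ i"] inK[OF that] nz[OF that] that by auto
  have "vec 3 (\<lambda>i. vec 3 (\<lambda>i. Sp 0 3 (t $ 0) $ i * Sp 1 3 (t $ 1) $ i) $ i * Sp 2 3 (t $ 2) $ i) \<in> G"
    by (intro Gmult s) auto
  moreover have "vec 3 (\<lambda>i. vec 3 (\<lambda>i. Sp 0 3 (t $ 0) $ i * Sp 1 3 (t $ 1) $ i) $ i * Sp 2 3 (t $ 2) $ i) = t"
  proof (rule eq_vecI)
    fix i assume "i < dim_vec t"
    then have "i = 0 \<or> i = 1 \<or> i = 2" using t by auto
    then show "vec 3 (\<lambda>i. vec 3 (\<lambda>i. Sp 0 3 (t $ 0) $ i * Sp 1 3 (t $ 1) $ i) $ i * Sp 2 3 (t $ 2) $ i) $ i = t $ i"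
      by (elim disjE) (simp_all add: Sp_def)
  qed (simp add: t)
  ultimately show ?thesis by simp
qed


definition H :: "complex vec set" where "H = powv m ` G"

lemma H_triv:
  assumes s: "s \<noteq> 0" and sH: "Sp 0 3 s \<in> H" shows "s = 1"
proof -
  obtain t where t: "t \<in> G" and eq: "Sp 0 3 s = powv m t" using sH by (auto simp: H_def)
  have tc: "t \<in> T1_carrier" using car t .
  have e: "Sp 0 3 s $ i = powv m t $ i" for i using eq by simp
  have t1: "t $ 1 ^ m = 1" using e[of 1] by (simp add: Sp_def powv_def)
  have t2: "t $ 2 ^ m = 1" using e[of 2] by (simp add: Sp_def powv_def)
  have t0: "s = t $ 0 ^ m" using e[of 0] by (simp add: Sp_def powv_def)
  define r where "r = vec 3 (\<lambda>i. if i = 0 then 1 else t $ i)"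
  have rG: "r \<in> G"
  proof (rule Tm_sub)
    show "dim_vec r = 3" by (simp add: r_def)
    fix i :: nat assume "i < 3"
    then have "i = 0 \<or> i = 1 \<or> i = 2" by auto
    then show "r $ i ^ m = 1" using t1 t2 by (auto simp: r_def)
  qed
  have nz0: "t $ 0 \<noteq> 0" using tc by (auto simp: T1_carrier_def)
  have nzs: "t $ 1 \<noteq> 0" "t $ 2 \<noteq> 0" using tc by (auto simp: T1_carrier_def)
  have "mulv t (invv r) = Sp 0 3 (t $ 0)"
  proof (rule eq_vecI)
    fix i assume "i < dim_vec (Sp 0 3 (t $ 0))"
    then have "i = 0 \<or> i = 1 \<or> i = 2" by (auto simp: Sp_def)
    then show "mulv t (invv r) $ i = Sp 0 3 (t $ 0) $ i" using nzs by (auto simp: mulv_def invv_def r_def Sp_def)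
  qed (simp add: mulv_def Sp_def)
  moreover have "mulv t (invv r) \<in> G" using t rG by (intro Gmulv Ginvv)
  ultimately have "t $ 0 \<in> K" using nz0 by (simp add: K_def)
  then show ?thesis using K_roots t0 by simp
qed

lemma H_inv: "invtriv H"
proof (unfold_locales)
  show "t \<in> T1_carrier" if "t \<in> H" for t using that car powv_car by (auto simp: H_def)
  show "vec 3 (\<lambda>i. s $ i * t $ i) \<in> H" if a: "s \<in> H" "t \<in> H" for s t
  proof -
    obtain s' t' where "s' \<in> G" "t' \<in> G" "s = powv m s'" "t = powv m t'" using a by (auto simp: H_def)
    moreover have "vec 3 (\<lambda>i. powv m s' $ i * powv m t' $ i) = powv m (mulv s' t')"
      by (rule eq_vecI) (auto simp: powv_def mulv_def power_mult_distrib)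
    ultimately show ?thesis using Gmulv by (auto simp: H_def)
  qed
  show "vec 3 (\<lambda>i. inverse (t $ i)) \<in> H" if a: "t \<in> H" for t
  proof -
    obtain t' where "t' \<in> G" "t = powv m t'" using a by (auto simp: H_def)
    moreover have "vec 3 (\<lambda>i. inverse (powv m t' $ i)) = powv m (invv t')"
      by (rule eq_vecI) (auto simp: powv_def invv_def power_inverse)
    ultimately show ?thesis using Ginvv by (auto simp: H_def)
  qed
  show "vec 3 (\<lambda>j. X t (g j)) \<in> H" if a: "g permutes {0..<4}" "evenperm g" "t \<in> H" for g t
  proof -
    obtain t' where t': "t' \<in> G" "t = powv m t'" using a by (auto simp: H_def)
    moreover have "vec 3 (\<lambda>j. X (powv m t') (g j)) = powv m (actv g t')"
      by (rule eq_vecI) (simp_all add: actv_def)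
    ultimately show ?thesis using Gactv a(1,2) by (auto simp: H_def)
  qed
  show "s = 1" if "s \<noteq> 0" "Sp 0 3 s \<in> H" for s using H_triv that .
qed

lemma G_diag: "t \<in> G \<Longrightarrow> k < 4 \<Longrightarrow> X t k ^ m = X t 0 ^ m"
  using invtriv.diag[OF H_inv, of "powv m t" k] by (auto simp: H_def)

lemma G_pow4: "t \<in> G \<Longrightarrow> (X t 0 ^ m) ^ 4 = 1"
  using invtriv.pow4[OF H_inv, of "powv m t"] by (auto simp: H_def)

definition E :: "complex set" where "E = (\<lambda>t. X t 0 ^ m) ` G"
definition kk :: nat where "kk = card E"

lemma E_props: "E = {z. z ^ kk = 1}" "kk \<ge> 1"
proof -
  have fE: "finite E" using fin by (simp add: E_def)
  have 1: "1 \<in> E" using Gone unfolding E_def by (force simp: X_def)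
  have 0: "0 \<notin> E" using car X_nz m_pos by (fastforce simp: E_def)
  have mul: "x * y \<in> E" if xy: "x \<in> E" "y \<in> E" for x y
  proof -
    obtain s t where "s \<in> G" "t \<in> G" "x = X s 0 ^ m" "y = X t 0 ^ m" using xy unfolding E_def by blast
    then show ?thesis using Gmulv[of s t] by (force simp: E_def power_mult_distrib)
  qed
  show "E = {z. z ^ kk = 1}" "kk \<ge> 1" using fin_roots[OF fE 1 0 mul] by (auto simp: kk_def)
qed

lemma kk_cases: "kk = 1 \<or> kk = 2 \<or> kk = 4"
proof -
  have sub: "E \<subseteq> {z. z ^ 4 = 1}" using G_pow4 by (auto simp: E_def)
  have "kk \<le> 4"
    using card_mono[OF finite_roots_unity sub] card_roots_unity[of 4, where 'a=complex] by (simp add: kk_def)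
  moreover have "kk \<noteq> 3"
  proof
    assume k3: "kk = 3"
    have "E \<subseteq> {1}"
    proof
      fix z assume z: "z \<in> E"
      then have "z ^ 3 = 1" using E_props(1) k3 by auto
      moreover have "z ^ 4 = 1" using z sub by auto
      ultimately have "z = z ^ 4 / z ^ 3" by (simp add: eval_nat_numeral)
      then show "z \<in> {1}" using \<open>z ^ 3 = 1\<close> \<open>z ^ 4 = 1\<close> by simp
    qed
    then have "card E \<le> 1" using card_mono[of "{1}" E] by simp
    then show False using k3 by (simp add: kk_def)
  qed
  ultimately show ?thesis using E_props(2) by auto
qed

lemma G_char: "G = {t \<in> T1_carrier. \<exists>e. e ^ kk = 1 \<and> (\<forall>i<3. t $ i ^ m = e)}"
proof (intro equalityI subsetI)
  fix t assume t: "t \<in> G"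
  have "X t 0 ^ m \<in> E" using t by (simp add: E_def)
  then have "(X t 0 ^ m) ^ kk = 1" using E_props(1) by auto
  moreover have "\<forall>i<3. t $ i ^ m = X t 0 ^ m"
  proof (intro allI impI)
    fix i :: nat assume i: "i < 3"
    have "X t i ^ m = X t 0 ^ m" using G_diag[OF t, of i] i by simp
    then show "t $ i ^ m = X t 0 ^ m" using i by (simp add: X_def)
  qed
  ultimately show "t \<in> {t \<in> T1_carrier. \<exists>e. e ^ kk = 1 \<and> (\<forall>i<3. t $ i ^ m = e)}"
    using car[OF t] by blast
next
  fix t assume "t \<in> {t \<in> T1_carrier. \<exists>e. e ^ kk = 1 \<and> (\<forall>i<3. t $ i ^ m = e)}"
  then obtain e where tc: "t \<in> T1_carrier" and e: "e ^ kk = 1" and te: "\<And>i. i < 3 \<Longrightarrow> t $ i ^ m = e" by blast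
  have "e \<in> E" using E_props(1) e by auto
  then obtain s where s: "s \<in> G" and se: "e = X s 0 ^ m" by (auto simp: E_def)
  have sc: "s \<in> T1_carrier" using car s .
  have si: "s $ i ^ m = e" if "i < 3" for i using G_diag[OF s, of i] that se by (simp add: X_def)
  have snz: "s $ i \<noteq> 0" if "i < 3" for i using sc that by (auto simp: T1_carrier_def)
  have r: "mulv t (invv s) \<in> G"
  proof (rule Tm_sub)
    show "dim_vec (mulv t (invv s)) = 3" by (simp add: mulv_def)
    fix i :: nat assume i: "i < 3"
    have "e \<noteq> 0" using snz[OF i] si[OF i] by auto
    then show "mulv t (invv s) $ i ^ m = 1" using i te[OF i] si[OF i]
      by (simp add: mulv_def invv_def power_mult_distrib power_inverse)
  qed
  have "mulv (mulv t (invv s)) s = t"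
  proof (rule eq_vecI)
    fix i assume "i < dim_vec t"
    then have "i < 3" using tc by (simp add: T1_carrier_def)
    then show "mulv (mulv t (invv s)) s $ i = t $ i" using snz by (simp add: mulv_def invv_def)
  qed (use tc in \<open>simp add: mulv_def T1_carrier_def\<close>)
  then show "t \<in> G" using Gmulv[OF r s] by simp
qed
end

theorem corollary7p2:
  fixes W :: "int mat set" and G :: "complex vec set"
  assumes W_sub: "W \<subseteq> W1"
    and W_sup: "W1A \<subseteq> W"
    and W_mult: "\<forall>A\<in>W. \<forall>B\<in>W. A * B \<in> W"
    and W_inv: "\<forall>A\<in>W. \<exists>B\<in>W. A * B = 1\<^sub>m 3"
    and G_sub: "subgroup G T1"
    and G_fin: "finite G"
    and G_inv: "\<forall>A\<in>W. \<forall>t\<in>G. T1_act A t \<in> G"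
  shows "\<exists>n::nat.
           (T1\<lparr>carrier := G\<rparr> \<cong> mu n \<times>\<times> mu n \<times>\<times> mu n)
         \<or> (even n \<and> T1\<lparr>carrier := G\<rparr> \<cong> mu n \<times>\<times> mu n \<times>\<times> mu (n div 2))
         \<or> (even n \<and> T1\<lparr>carrier := G\<rparr> \<cong> mu n \<times>\<times> mu (n div 2) \<times>\<times> mu (n div 2))
         \<or> (4 dvd n \<and> T1\<lparr>carrier := G\<rparr> \<cong> mu n \<times>\<times> mu (n div 2) \<times>\<times> mu (n div 4))
         \<or> (4 dvd n \<and> T1\<lparr>carrier := G\<rparr> \<cong> mu n \<times>\<times> mu (n div 4) \<times>\<times> mu (n div 4))"
proof -
  have inv: "T1_act (perm_mat g) t \<in> G" if a: "g permutes {0..<4}" "evenperm g" "t \<in> G" for g t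
  proof -
    have "perm_mat g \<in> W" using W_sup a(1,2) by (auto simp: W1A_def)
    then show ?thesis using G_inv a(3) by blast
  qed
  interpret I: invsub G
    by (rule invsub.intro[OF G_sub _ G_fin]) (rule inv)
  have iso: "T1\<lparr>carrier := G\<rparr> \<cong> mu (I.kk * I.m) \<times>\<times> mu I.m \<times>\<times> mu I.m"
  proof (rule iso_G)
    show "I.kk > 0" using I.E_props(2) by simp
    show "I.m > 0" using I.m_pos by simp
    show "G = {t \<in> T1_carrier. \<exists>e. e ^ I.kk = 1 \<and> (\<forall>i<3. t $ i ^ I.m = e)}" by (rule I.G_char)
  qed
  from I.kk_cases show ?thesis
  proof (elim disjE)
    assume "I.kk = 1" then show ?thesis using iso by (intro exI[of _ I.m]) simp
  next
    assume "I.kk = 2" then show ?thesis using iso by (intro exI[of _ "2 * I.m"]) simp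
  next
    assume "I.kk = 4" then show ?thesis using iso by (intro exI[of _ "4 * I.m"]) simp
  qed
qed

end
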